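(* Let $\bar q=(q^2-1)/2$, and define $f$ on residues $t$ modulo $q^2-1$ with $t\not\equiv\bar q$ by the condition $\xi^{-t}+\xi^{f(t)}=-1$; then $f$ is a bijection from the residues $\not\equiv\bar q$ onto themselves. Let $j$ be an integer with $1\le j\le q$. For $t\in\{0,1,\dots,q-2\}$ put $e(t)=f^{-1}(t(q+1)-j)$, a residue modulo $q^2-1$, hence a well-defined residue modulo $q+1$. Then: - the $q-1$ residues $e(0),\dots,e(q-2)$ modulo $q+1$ are pairwise distinct; - none of them is congruent to $0$ or to $j$ modulo $q+1$.
   Context: Let $q$ be an odd prime power, $F=\mathrm{GF}(q^2)$, and let $\xi$ be a fixed primitive element of $F$ (so that $\xi^{\bar q}=-1$). *)

theory Defs
  imports "HOL-Computational_Algebra.Primes"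
begin

definition odd_prime_power :: "nat \<Rightarrow> bool" where
  "odd_prime_power q \<longleftrightarrow> (\<exists>p k. prime p \<and> odd p \<and> k > 0 \<and> q = p ^ k)"

definition primitive_elem :: "'a::field \<Rightarrow> bool" where
  "primitive_elem \<xi> \<longleftrightarrow> \<xi> \<noteq> 0 \<and> (\<forall>x. x \<noteq> 0 \<longrightarrow> (\<exists>n::nat. \<xi> ^ n = x))"

definition qbar :: "nat \<Rightarrow> int" where
  "qbar q = (int q ^ 2 - 1) div 2"

definition resid_dom :: "nat \<Rightarrow> int set" where
  "resid_dom q = {t. 0 \<le> t \<and> t < int q ^ 2 - 1 \<and> t \<noteq> qbar q}"

definition f_map :: "nat \<Rightarrow> 'a::field \<Rightarrow> int \<Rightarrow> int" where
  "f_map q \<xi> t = (THE s. 0 \<le> s \<and> s < int q ^ 2 - 1 \<and> \<xi> powi (-t) + \<xi> powi s = -1)"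

definition e_map :: "nat \<Rightarrow> 'a::field \<Rightarrow> int \<Rightarrow> int \<Rightarrow> int" where
  "e_map q \<xi> j t = the_inv_into (resid_dom q) (f_map q \<xi>) ((t * (int q + 1) - j) mod (int q ^ 2 - 1))"

end

theory Submission imports Defs "HOL-Number_Theory.Residues"
begin

lemma ff_pow_card:
  fixes x :: "'a :: {field,finite}"
  shows "x ^ card (UNIV :: 'a set) = x"
proof (cases "x = 0")
  case False
  have "x * (\<Prod>y\<in>UNIV-{0}. x * y) = x * x ^ (card (UNIV :: 'a set) - 1) * \<Prod>(UNIV-{0})"
    by (simp add: prod.distrib mult_ac)
  also have "x * x ^ (card (UNIV :: 'a set) - 1) = x ^ Suc (card (UNIV :: 'a set) - 1)"
    by (subst power_Suc) auto
  also have "Suc (card (UNIV :: 'a set) - 1) = card (UNIV :: 'a set)"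
    using finite_UNIV_card_ge_0[where ?'a = 'a] by simp
  also have "(\<Prod>y\<in>UNIV-{0}. x * y) = (\<Prod>y\<in>UNIV-{0}. y)"
    by (rule prod.reindex_bij_witness[of _ "\<lambda>y. y / x" "\<lambda>y. x * y"]) (use False in auto)
  finally show ?thesis
    by simp
qed (use finite_UNIV_card_ge_0[where ?'a = 'a] in auto)

lemma pow_mod_period:
  fixes x :: "'a::monoid_mult"
  assumes "x ^ r = 1"
  shows "x ^ m = x ^ (m mod r)"
proof -
  have "x ^ m = x ^ (r * (m div r) + m mod r)" by simp
  also have "\<dots> = x ^ (m mod r)" by (simp only: power_add power_mult assms power_one mult_1)
  finally show ?thesis .
qed

lemma card_nonzero:
  shows "card (UNIV - {0::'a::{field,finite}}) = card (UNIV::'a set) - 1"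
  by (simp add: card_Diff_singleton)

lemma prim_order:
  fixes \<xi> :: "'a::{field,finite}"
  assumes prim: "primitive_elem \<xi>"
  shows "\<xi> ^ n = 1 \<longleftrightarrow> (card (UNIV::'a set) - 1) dvd n"
proof -
  define N where "N = card (UNIV::'a set) - 1"
  have nz: "\<xi> \<noteq> 0" using prim by (simp add: primitive_elem_def)
  have c2: "card (UNIV::'a set) \<ge> 2"
  proof -
    have "{0::'a,1} \<subseteq> UNIV" by simp
    hence "card {0::'a,1} \<le> card (UNIV::'a set)" by (intro card_mono) auto
    thus ?thesis by simp
  qed
  hence Npos: "N > 0" by (simp add: N_def)
  have xN: "\<xi> ^ N = 1"
  proof -
    have "\<xi> * \<xi> ^ N = \<xi> ^ Suc N" by simp
    also have "Suc N = card (UNIV::'a set)" using c2 by (simp add: N_def)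
    also have "\<xi> ^ \<dots> = \<xi>" by (rule ff_pow_card)
    finally show ?thesis using nz by simp
  qed
  show ?thesis unfolding N_def[symmetric]
  proof
    assume "N dvd n" then obtain k where "n = N * k" by auto
    thus "\<xi> ^ n = 1" by (simp add: power_mult xN)
  next
    assume h: "\<xi> ^ n = 1"
    define r where "r = n mod N"
    have xr: "\<xi> ^ r = 1" using pow_mod_period[OF xN, of n] h by (simp add: r_def)
    show "N dvd n"
    proof (rule ccontr)
      assume "\<not> N dvd n"
      hence r0: "r > 0" by (simp add: r_def dvd_eq_mod_eq_0)
      have rN: "r < N" using Npos by (simp add: r_def)
      have "UNIV - {0} \<subseteq> (\<lambda>m. \<xi> ^ m) ` {..<r}"
      proof
        fix x :: 'a assume "x \<in> UNIV - {0}"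
        then obtain m where "\<xi> ^ m = x" using prim by (auto simp: primitive_elem_def)
        hence "x = \<xi> ^ (m mod r)" using pow_mod_period[OF xr, of m] by simp
        moreover have "m mod r < r" using r0 by simp
        ultimately show "x \<in> (\<lambda>m. \<xi> ^ m) ` {..<r}" by blast
      qed
      hence "card (UNIV - {0::'a}) \<le> card ((\<lambda>m. \<xi> ^ m) ` {..<r})" by (intro card_mono) auto
      also have "\<dots> \<le> r" using card_image_le[of "{..<r}" "\<lambda>m. \<xi> ^ m"] by simp
      finally show False using rN card_nonzero[where 'a='a] by (simp add: N_def)
    qed
  qed
qed


locale L8 =
  fixes \<xi> :: "'a::{field,finite}" and q :: nat and p k :: nat
  assumes pp: "prime p" and podd: "odd p" and kpos: "k > 0" and qdef: "q = p ^ k"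
    and card: "card (UNIV :: 'a set) = q ^ 2"
    and prim: "primitive_elem \<xi>"
begin

abbreviation "N \<equiv> int q ^ 2 - 1"
abbreviation P where "P a \<equiv> \<xi> powi a"

lemma q3: "q \<ge> 3"
proof -
  have "p \<ge> 2" using pp prime_ge_2_nat by blast
  hence p3: "p \<ge> 3" using podd by (cases "p = 2") auto
  have "p \<le> p ^ k" using kpos p3 by (simp add: self_le_power)
  thus ?thesis using p3 qdef by simp
qed

lemma qodd: "odd q" using podd qdef by simp

lemma Npos: "N > 0"
proof -
  have "3 * 3 \<le> q * q" using q3 mult_le_mono by blast
  hence "int (3*3) \<le> int (q * q)" by (simp only: of_nat_le_iff)
  hence "9 \<le> int q * int q" by simp
  thus ?thesis by (simp add: power2_eq_square)
qed

lemma Nfac: "N = (int q + 1) * (int q - 1)" by (simp add: algebra_simps power2_eq_square)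

lemma N_nat: "N = int (card (UNIV::'a set) - 1)"
  using card q3 by (simp add: of_nat_diff)

lemma xnz: "\<xi> \<noteq> 0" using prim by (simp add: primitive_elem_def)

lemma powi_red: "P a = \<xi> ^ nat (a mod N)"
proof -
  have PN: "P N = 1" using prim_order[OF prim] by (simp add: N_nat)
  have "P a = P (N * (a div N) + a mod N)" by (simp only: mult_div_mod_eq)
  also have "\<dots> = P (N * (a div N)) * P (a mod N)" using xnz by (intro power_int_add) simp
  also have "P (N * (a div N)) = 1" by (simp add: power_int_mult PN)
  also have "a mod N = int (nat (a mod N))" using Npos by simp
  also have "P (int (nat (a mod N))) = \<xi> ^ nat (a mod N)" by (rule power_int_of_nat)
  finally show ?thesis by simp
qed

lemma powi_one: "P a = 1 \<longleftrightarrow> N dvd a"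
proof -
  have "P a = 1 \<longleftrightarrow> (card (UNIV::'a set) - 1) dvd nat (a mod N)"
    using powi_red prim_order[OF prim] by simp
  also have "\<dots> \<longleftrightarrow> N dvd int (nat (a mod N))" unfolding N_nat by (simp only: int_dvd_int_iff)
  also have "int (nat (a mod N)) = a mod N" using Npos by simp
  also have "N dvd a mod N \<longleftrightarrow> N dvd a" by (simp add: dvd_mod_iff)
  finally show ?thesis .
qed

lemma Peq: "P a = P b \<longleftrightarrow> a mod N = b mod N"
proof -
  have "P (a - b) = P a / P b" using xnz by (simp add: power_int_diff)
  hence "P a = P b \<longleftrightarrow> P (a - b) = 1" using xnz by auto
  thus ?thesis by (simp add: powi_one mod_eq_dvd_iff)
qed

lemma Pinj: "0 \<le> a \<Longrightarrow> a < N \<Longrightarrow> 0 \<le> b \<Longrightarrow> b < N \<Longrightarrow> P a = P b \<Longrightarrow> a = b"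
  by (simp add: Peq)

lemma surjP: "x \<noteq> 0 \<Longrightarrow> \<exists>s. 0 \<le> s \<and> s < N \<and> P s = x"
proof -
  assume "x \<noteq> 0"
  then obtain n where n: "\<xi> ^ n = x" using prim by (auto simp: primitive_elem_def)
  have "P (int n mod N) = P (int n)" by (simp only: Peq mod_mod_trivial)
  thus ?thesis using n Npos by (intro exI[of _ "int n mod N"]) auto
qed

lemma qbar_eq: "qbar q = (int q + 1) * ((int q - 1) div 2)" "2 * qbar q = N"
proof -
  obtain m where m: "q = 2 * m + 1" using qodd oddE by blast
  have "int q ^ 2 - 1 = 2 * (2 * (int m * int m + int m))" by (simp add: m algebra_simps power2_eq_square)
  hence "qbar q = 2 * (int m * int m + int m)" unfolding qbar_def by simp
  thus "qbar q = (int q + 1) * ((int q - 1) div 2)" "2 * qbar q = N"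
    by (simp_all add: m algebra_simps power2_eq_square)
qed

lemma qbar_range: "0 < qbar q" "qbar q < N"
  using qbar_eq(2) Npos by auto

lemma P_qbar: "P (qbar q) = -1"
proof -
  have "P (qbar q + qbar q) = P (qbar q) * P (qbar q)" using xnz by (intro power_int_add) simp
  also have "qbar q + qbar q = N" using qbar_eq(2) by simp
  finally have e1: "P (qbar q) * P (qbar q) = P N" by simp
  have "P N = 1" unfolding powi_one by simp
  hence "P (qbar q) * P (qbar q) = 1" using e1 by simp
  hence "(P (qbar q) - 1) * (P (qbar q) + 1) = 0" by (simp add: algebra_simps)
  moreover have "P (qbar q) \<noteq> 1" unfolding powi_one using qbar_range zdvd_not_zless by blast
  ultimately show ?thesis by (simp add: eq_neg_iff_add_eq_0)
qed

lemma P_m1: "0 \<le> s \<Longrightarrow> s < N \<Longrightarrow> P s = -1 \<longleftrightarrow> s = qbar q"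
  using Pinj[of s "qbar q"] qbar_range P_qbar by auto


lemma char_p: "CHAR('a) = p"
proof -
  have fin: "finite (UNIV::'a set)" by simp
  have cp: "CHAR('a) > 0" using finite_imp_CHAR_pos[OF fin] by simp
  have pr: "prime CHAR('a)" using prime_CHAR_semidom[OF cp] .
  have "CHAR('a) dvd p ^ (2 * k)" using CHAR_dvd_CARD[where 'a='a] card qdef
    by (simp add: power_mult[symmetric] mult.commute)
  hence "CHAR('a) dvd p" using pr prime_dvd_power by blast
  thus ?thesis using pr pp primes_dvd_imp_eq by blast
qed

lemma frob: "(x + y :: 'a) ^ q = x ^ q + y ^ q"
  using char_p pp qdef by (intro freshmans_dream'[where n=k]) auto

lemma frob_neg: "(- x :: 'a) ^ q = - (x ^ q)"
  using qodd by simp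

lemma frob_diff: "(x - y :: 'a) ^ q = x ^ q - y ^ q"
  using frob[of x "-y"] frob_neg[of y] by simp

lemma P_pow: "P a ^ q = P (a * int q)"
  by (simp add: power_int_mult)

lemma P_K: "P a ^ q = P a \<longleftrightarrow> (int q + 1) dvd a"
proof -
  have "P a ^ q = P a \<longleftrightarrow> N dvd a * int q - a" unfolding P_pow Peq mod_eq_dvd_iff ..
  also have "a * int q - a = (int q - 1) * a" by (simp add: algebra_simps)
  also have "N dvd (int q - 1) * a \<longleftrightarrow> (int q + 1) dvd a"
    unfolding Nfac using q3 by (subst mult.commute) (simp only: dvd_mult_cancel_right, simp)
  finally show ?thesis .
qed

lemma P_inv: "P (- a) = inverse (P a)" by (simp add: power_int_minus)

lemma Pnz: "P a \<noteq> 0" using xnz by simp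

lemma dom_iff: "t \<in> resid_dom q \<longleftrightarrow> 0 \<le> t \<and> t < N \<and> t \<noteq> qbar q"
  by (simp add: resid_dom_def)

lemma f_char:
  assumes t: "t \<in> resid_dom q" and s: "0 \<le> s" "s < N"
  shows "f_map q \<xi> t = s \<longleftrightarrow> P (- t) + P s = -1"
proof -
  have "P t \<noteq> -1" using t P_m1[of t] by (simp add: dom_iff)
  hence "P (-t) \<noteq> -1" unfolding P_inv by (metis inverse_minus_eq inverse_1 inverse_inverse_eq)
  hence "-1 - P (-t) \<noteq> 0" by (metis add.inverse_inverse diff_0 diff_add_cancel eq_iff_diff_eq_0 minus_diff_eq)
  then obtain s0 where s0: "0 \<le> s0" "s0 < N" "P s0 = -1 - P (-t)" using surjP by blast
  have ex: "0 \<le> s0 \<and> s0 < N \<and> P (-t) + P s0 = -1" using s0 by simp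
  have un: "\<And>s'. 0 \<le> s' \<and> s' < N \<and> P (-t) + P s' = -1 \<Longrightarrow> s' = s0"
  proof -
    fix s' assume h: "0 \<le> s' \<and> s' < N \<and> P (-t) + P s' = -1"
    hence "P s' = P s0" using s0 by (metis add_diff_cancel_left')
    thus "s' = s0" using h s0 Pinj by blast
  qed
  have fe: "f_map q \<xi> t = s0" unfolding f_map_def using ex un by (rule the_equality)
  show ?thesis
  proof
    assume "f_map q \<xi> t = s" thus "P (- t) + P s = -1" using fe ex by simp
  next
    assume "P (- t) + P s = -1" thus "f_map q \<xi> t = s" using un s fe by simp
  qed
qed

lemma f_in: assumes t: "t \<in> resid_dom q" shows "f_map q \<xi> t \<in> resid_dom q \<and> P (-t) + P (f_map q \<xi> t) = -1"
proof -
  have "P t \<noteq> -1" using t P_m1[of t] by (simp add: dom_iff)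
  hence "P (-t) \<noteq> -1" unfolding P_inv by (metis inverse_minus_eq inverse_1 inverse_inverse_eq)
  hence "-1 - P (-t) \<noteq> 0" by (metis add.inverse_inverse diff_0 diff_add_cancel eq_iff_diff_eq_0 minus_diff_eq)
  then obtain s0 where s0: "0 \<le> s0" "s0 < N" "P s0 = -1 - P (-t)" using surjP by blast
  have fe: "f_map q \<xi> t = s0" using f_char[OF t s0(1,2)] s0(3) by simp
  have "s0 \<noteq> qbar q"
  proof
    assume "s0 = qbar q" hence "P (-t) = 0" using s0 P_qbar by simp
    thus False using Pnz by blast
  qed
  thus ?thesis using fe s0 by (simp add: dom_iff)
qed

lemma f_bij: "bij_betw (f_map q \<xi>) (resid_dom q) (resid_dom q)"
proof (rule bij_betw_imageI)
  show "inj_on (f_map q \<xi>) (resid_dom q)"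
  proof
    fix t1 t2 assume t1: "t1 \<in> resid_dom q" and t2: "t2 \<in> resid_dom q" and e: "f_map q \<xi> t1 = f_map q \<xi> t2"
    have "P (-t1) = P (-t2)" using f_in[OF t1] f_in[OF t2] e by (metis add_right_cancel)
    hence "P t1 = P t2" unfolding P_inv by simp
    thus "t1 = t2" using Pinj t1 t2 by (simp add: dom_iff)
  qed
  show "f_map q \<xi> ` resid_dom q = resid_dom q"
  proof
    show "f_map q \<xi> ` resid_dom q \<subseteq> resid_dom q" using f_in by blast
    show "resid_dom q \<subseteq> f_map q \<xi> ` resid_dom q"
    proof
      fix s assume s: "s \<in> resid_dom q"
      have "P s \<noteq> -1" using s P_m1[of s] by (simp add: dom_iff)
      hence y: "-1 - P s \<noteq> 0" by (metis add.inverse_inverse diff_0 diff_add_cancel eq_iff_diff_eq_0 minus_diff_eq)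
      hence "inverse (-1 - P s) \<noteq> 0" by simp
      then obtain t0 where t0: "0 \<le> t0" "t0 < N" "P t0 = inverse (-1 - P s)" using surjP by blast
      have pt: "P (-t0) = -1 - P s" unfolding P_inv t0(3) by simp
      have "t0 \<noteq> qbar q"
      proof
        assume "t0 = qbar q"
        hence "P (-t0) = -1" unfolding P_inv using P_qbar by simp
        thus False using pt Pnz[of s] by simp
      qed
      hence tdom: "t0 \<in> resid_dom q" using t0 by (simp add: dom_iff)
      have "f_map q \<xi> t0 = s" using f_char[OF tdom] s pt by (simp add: dom_iff)
      thus "s \<in> f_map q \<xi> ` resid_dom q" using tdom by blast
    qed
  qed
qed

lemma u_dom:
  assumes j: "1 \<le> j" "j \<le> int q"
  shows "(t * (int q + 1) - j) mod N \<in> resid_dom q"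
    and "P ((t * (int q + 1) - j) mod N) = P (t * (int q + 1)) * P (- j)"
proof -
  let ?u = "(t * (int q + 1) - j) mod N"
  have r: "0 \<le> ?u" "?u < N" using Npos by auto
  have d: "(int q + 1) dvd N" unfolding Nfac by simp
  have "?u mod (int q + 1) = (t * (int q + 1) - j) mod (int q + 1)" using d by (rule mod_mod_cancel)
  also have "\<dots> = (- j) mod (int q + 1)" by (simp add: mod_diff_left_eq[symmetric])
  finally have um: "?u mod (int q + 1) = (- j) mod (int q + 1)" .
  have "(- j) mod (int q + 1) \<noteq> 0"
  proof
    assume "(- j) mod (int q + 1) = 0"
    hence "(int q + 1) dvd j" by (simp add: dvd_eq_mod_eq_0[symmetric])
    thus False using j zdvd_not_zless[of j "int q + 1"] by simp
  qed
  moreover have "qbar q mod (int q + 1) = 0" unfolding qbar_eq(1) by simp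
  ultimately have "?u \<noteq> qbar q" using um by auto
  thus "?u \<in> resid_dom q" using r by (simp add: dom_iff)
  have "P ?u = P (t * (int q + 1) + (- j))" by (simp only: Peq mod_mod_trivial diff_conv_add_uminus)
  also have "\<dots> = P (t * (int q + 1)) * P (- j)" using xnz by (intro power_int_add) simp
  finally show "P ?u = P (t * (int q + 1)) * P (- j)" .
qed

lemma e_prop:
  assumes j: "1 \<le> j" "j \<le> int q"
  shows "e_map q \<xi> j t \<in> resid_dom q"
    and "P (- e_map q \<xi> j t) = -1 - P (t * (int q + 1)) * P (- j)"
proof -
  let ?u = "(t * (int q + 1) - j) mod N"
  have ud: "?u \<in> resid_dom q" using u_dom[OF j] by blast
  have e: "e_map q \<xi> j t = the_inv_into (resid_dom q) (f_map q \<xi>) ?u" by (simp add: e_map_def)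
  have inj: "inj_on (f_map q \<xi>) (resid_dom q)" using f_bij by (simp add: bij_betw_def)
  have img: "?u \<in> f_map q \<xi> ` resid_dom q" using f_bij ud by (simp add: bij_betw_def)
  show ed: "e_map q \<xi> j t \<in> resid_dom q" unfolding e using the_inv_into_into[OF inj img] by blast
  have "f_map q \<xi> (e_map q \<xi> j t) = ?u" unfolding e using f_the_inv_into_f[OF inj img] .
  hence "P (- e_map q \<xi> j t) + P ?u = -1" using f_in[OF ed] by simp
  thus "P (- e_map q \<xi> j t) = -1 - P (t * (int q + 1)) * P (- j)"
    using u_dom(2)[OF j] by (simp add: eq_diff_eq)
qed

lemma beta_notK: assumes j: "1 \<le> j" "j \<le> int q" shows "P (- j) ^ q \<noteq> P (- j)"
  unfolding P_K using j zdvd_not_zless[of j "int q + 1"] by simp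

lemma a_K: "P (t * (int q + 1)) ^ q = P (t * (int q + 1))"
  unfolding P_K by simp

lemma part_inj:
  assumes j: "1 \<le> j" "j \<le> int q"
  shows "inj_on (\<lambda>t. e_map q \<xi> j t mod (int q + 1)) {0 .. int q - 2}"
proof
  fix t1 t2 assume t1: "t1 \<in> {0 .. int q - 2}" and t2: "t2 \<in> {0 .. int q - 2}"
    and h: "e_map q \<xi> j t1 mod (int q + 1) = e_map q \<xi> j t2 mod (int q + 1)"
  define e1 where "e1 = e_map q \<xi> j t1"
  define e2 where "e2 = e_map q \<xi> j t2"
  define a1 where "a1 = P (t1 * (int q + 1))"
  define a2 where "a2 = P (t2 * (int q + 1))"
  define b where "b = P (- j)"
  define c where "c = P (- e1 - (- e2))"
  have y1: "P (- e1) = -1 - a1 * b" unfolding e1_def a1_def b_def using e_prop(2)[OF j] .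
  have y2: "P (- e2) = -1 - a2 * b" unfolding e2_def a2_def b_def using e_prop(2)[OF j] .
  have "(int q + 1) dvd (- e1 - (- e2))" using h unfolding e1_def e2_def
    by (metis minus_diff_eq dvd_minus_iff mod_eq_dvd_iff diff_minus_eq_add uminus_add_conv_diff)
  hence cK: "c ^ q = c" unfolding c_def P_K .
  have "c = P (- e1) / P (- e2)" unfolding c_def using xnz by (intro power_int_diff) simp
  hence ceq: "-1 - a1 * b = c * (-1 - a2 * b)" using y1 y2 Pnz[of "- e2"] by simp
  have a1K: "a1 ^ q = a1" and a2K: "a2 ^ q = a2" unfolding a1_def a2_def by (rule a_K)+
  have bK: "b ^ q \<noteq> b" unfolding b_def by (rule beta_notK[OF j])
  have key: "c - 1 = (a1 - c * a2) * b" using ceq by (simp add: algebra_simps)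
  have z: "a1 - c * a2 = 0"
  proof (rule ccontr)
    assume nz: "a1 - c * a2 \<noteq> 0"
    hence "b = (c - 1) / (a1 - c * a2)" using key by (simp add: field_simps)
    hence "b ^ q = (c ^ q - 1 ^ q) / (a1 ^ q - c ^ q * a2 ^ q)"
      by (simp add: power_divide frob_diff power_mult_distrib)
    also have "\<dots> = b" using cK a1K a2K \<open>b = (c - 1) / (a1 - c * a2)\<close> by simp
    finally show False using bK by simp
  qed
  hence "c = 1" using key by simp
  hence "a1 = a2" using z by simp
  hence "(t1 * (int q + 1)) mod N = (t2 * (int q + 1)) mod N" unfolding a1_def a2_def Peq .
  hence "N dvd (t1 - t2) * (int q + 1)" by (simp add: mod_eq_dvd_iff algebra_simps)
  hence dd: "(int q - 1) dvd (t1 - t2)" unfolding Nfac using q3 by (simp add: mult.commute)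
  show "t1 = t2"
  proof (rule ccontr)
    assume "t1 \<noteq> t2"
    hence "\<bar>int q - 1\<bar> \<le> \<bar>t1 - t2\<bar>" using dd dvd_imp_le_int by simp
    thus False using t1 t2 q3 by auto
  qed
qed

lemma part_ne0:
  assumes j: "1 \<le> j" "j \<le> int q"
  shows "e_map q \<xi> j t mod (int q + 1) \<noteq> 0"
proof
  assume h: "e_map q \<xi> j t mod (int q + 1) = 0"
  define e where "e = e_map q \<xi> j t"
  define a where "a = P (t * (int q + 1))"
  define b where "b = P (- j)"
  define y where "y = P (- e)"
  have y: "y = -1 - a * b" unfolding y_def e_def a_def b_def using e_prop(2)[OF j] .
  have "(int q + 1) dvd (- e)" using h unfolding e_def dvd_minus_iff by (simp add: dvd_eq_mod_eq_0)
  hence yK: "y ^ q = y" unfolding y_def P_K .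
  have aK: "a ^ q = a" unfolding a_def by (rule a_K)
  have bK: "b ^ q \<noteq> b" unfolding b_def by (rule beta_notK[OF j])
  have anz: "a \<noteq> 0" unfolding a_def by (rule Pnz)
  have bb: "b = (-1 - y) / a" using y anz by (simp add: field_simps)
  hence "b ^ q = ((-1) ^ q - y ^ q) / a ^ q" by (simp add: power_divide frob_diff)
  also have "\<dots> = b" using yK aK bb qodd by simp
  finally show False using bK by simp
qed

lemma part_nej:
  assumes j: "1 \<le> j" "j \<le> int q"
  shows "e_map q \<xi> j t mod (int q + 1) \<noteq> j mod (int q + 1)"
proof
  assume h: "e_map q \<xi> j t mod (int q + 1) = j mod (int q + 1)"
  define e where "e = e_map q \<xi> j t"
  define a where "a = P (t * (int q + 1))"
  define b where "b = P (- j)"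
  define c where "c = P (- e - (- j))"
  have y: "P (- e) = -1 - a * b" unfolding e_def a_def b_def using e_prop(2)[OF j] .
  have "(int q + 1) dvd (- e - (- j))" using h unfolding e_def
    by (metis minus_diff_eq dvd_minus_iff mod_eq_dvd_iff diff_minus_eq_add uminus_add_conv_diff)
  hence cK: "c ^ q = c" unfolding c_def P_K .
  have "c = P (- e) / b" unfolding c_def b_def using xnz by (intro power_int_diff) simp
  hence ceq: "-1 - a * b = c * b" using y Pnz[of "- j"] unfolding b_def by simp
  have aK: "a ^ q = a" unfolding a_def by (rule a_K)
  have bK: "b ^ q \<noteq> b" unfolding b_def by (rule beta_notK[OF j])
  have key: "-1 = (a + c) * b" using ceq by (simp add: algebra_simps)
  hence nz: "a + c \<noteq> 0" by auto
  hence bb: "b = -1 / (a + c)" using key by (simp add: field_simps)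
  hence "b ^ q = (-1) ^ q / (a + c) ^ q" by (simp only: power_divide)
  also have "(a + c) ^ q = a ^ q + c ^ q" by (rule frob)
  also have "(-1) ^ q / (a ^ q + c ^ q) = -1 / (a + c)" using cK aK qodd by simp
  also have "\<dots> = b" using bb by simp
  finally show False using bK by simp
qed
end


theorem lemma8:
  fixes \<xi> :: "'a::{field,finite}" and q :: nat and j :: int
  assumes "odd_prime_power q"
    and "card (UNIV :: 'a set) = q ^ 2"
    and "primitive_elem \<xi>"
    and "1 \<le> j" and "j \<le> int q"
  shows "bij_betw (f_map q \<xi>) (resid_dom q) (resid_dom q)
    \<and> inj_on (\<lambda>t. e_map q \<xi> j t mod (int q + 1)) {0 .. int q - 2}
    \<and> (\<forall>t \<in> {0 .. int q - 2}.
         e_map q \<xi> j t mod (int q + 1) \<noteq> 0 \<and>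
         e_map q \<xi> j t mod (int q + 1) \<noteq> j mod (int q + 1))"
proof -
  obtain p k where pk: "prime p" "odd p" "k > 0" "q = p ^ k"
    using assms(1) unfolding odd_prime_power_def by blast
  interpret L8 \<xi> q p k using pk assms(2,3) by unfold_locales auto
  show ?thesis
    by (intro conjI ballI f_bij part_inj[OF assms(4,5)] part_ne0[OF assms(4,5)] part_nej[OF assms(4,5)])
qed

end
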